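(* Let $L \ge N$ be positive integers, let $\mathbf{T} \in \mathbb{R}^{L\times N}$ have full rank $N$, and let $\gamma>0$. Equip $\mathbb{R}^N$ with the scalar product $\langle \mathbf{x},\mathbf{y}\rangle_{\mathbf{T}} := \mathbf{x}^{T}\mathbf{T}^{*}\mathbf{T}\mathbf{y}$ and norm $\|\mathbf{x}\|_{\mathbf{T}} := \|\mathbf{T}\mathbf{x}\|_2$. Then the operator $\mathbf{T}^{\dagger} S_\gamma \mathbf{T}:\mathbb{R}^N\to\mathbb{R}^N$ is the proximity operator, with respect to this scalar product, of a proper, lower semi-continuous, convex function $\Phi:\mathbb{R}^N\to\mathbb{R}\cup\{+\infty\}$; that is, for every $\mathbf{z}\in\mathbb{R}^N$, $$\mathbf{T}^{\dagger} S_\gamma (\mathbf{T}\mathbf{z}) = \operatorname*{argmin}_{\mathbf{x}\in\mathbb{R}^N}\Big\{\tfrac12\|\mathbf{z}-\mathbf{x}\|_{\mathbf{T}}^2 + \Phi(\mathbf{x})\Big\}.$$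
   Context: $\mathbf{T}^{*}$ denotes the transpose of $\mathbf{T}$ and $\mathbf{T}^{\dagger} = (\mathbf{T}^{*}\mathbf{T})^{-1}\mathbf{T}^{*}$ its Moore–Penrose inverse. $S_\gamma:\mathbb{R}^L\to\mathbb{R}^L$ is the componentwise soft shrinkage operator: $[S_\gamma(\mathbf{y})]_j = y_j-\gamma$ if $y_j\ge\gamma$, $y_j+\gamma$ if $y_j\le-\gamma$, and $0$ if $|y_j|<\gamma$. Equivalently, the conclusion says: $\mathbf{x}=\mathbf{T}^{\dagger}S_\gamma\mathbf{T}\mathbf{z}$ if and only if $\mathbf{z}-\mathbf{x}$ lies in the subdifferential of $\Phi$ at $\mathbf{x}$ taken with respect to $\langle\cdot,\cdot\rangle_{\mathbf{T}}$, i.e. $\langle \mathbf{z}-\mathbf{x}, \tilde{\mathbf{x}}-\mathbf{x}\rangle_{\mathbf{T}} \le \Phi(\tilde{\mathbf{x}})-\Phi(\mathbf{x})$ for all $\tilde{\mathbf{x}}$. *)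

theory Defs
  imports "HOL-Analysis.Analysis" "HOL-Library.Extended_Real"
begin

definition soft_shrink :: "real \<Rightarrow> real^'l \<Rightarrow> real^'l" where
  "soft_shrink \<gamma> y = (\<chi> j. if y $ j \<ge> \<gamma> then y $ j - \<gamma>
                          else if y $ j \<le> - \<gamma> then y $ j + \<gamma> else 0)"

text \<open>Moore--Penrose inverse of a full column rank matrix: (T^* T)^{-1} T^*.\<close>
definition pinv :: "real^'n^'l \<Rightarrow> real^'l^'n" where
  "pinv T = matrix_inv (transpose T ** T) ** transpose T"

definition inner_T :: "real^'n^'l \<Rightarrow> real^'n \<Rightarrow> real^'n \<Rightarrow> real" where
  "inner_T T x y = x \<bullet> ((transpose T ** T) *v y)"

definition norm_T :: "real^'n^'l \<Rightarrow> real^'n \<Rightarrow> real" where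
  "norm_T T x = norm (T *v x)"

definition proper_fun :: "('a \<Rightarrow> ereal) \<Rightarrow> bool" where
  "proper_fun f \<longleftrightarrow> (\<forall>x. f x \<noteq> -\<infinity>) \<and> (\<exists>x. f x \<noteq> \<infinity>)"

definition lsc_fun :: "('a::topological_space \<Rightarrow> ereal) \<Rightarrow> bool" where
  "lsc_fun f \<longleftrightarrow> (\<forall>c::real. closed {x. f x \<le> ereal c})"

definition convex_fun :: "('a::real_vector \<Rightarrow> ereal) \<Rightarrow> bool" where
  "convex_fun f \<longleftrightarrow> convex {(x, c::real). f x \<le> ereal c}"

end

theory Submission
  imports Defs
begin

lemma norm2_sum: "(norm (v::real^'l))\<^sup>2 = (\<Sum>j\<in>UNIV. (v$j)\<^sup>2)"
  unfolding power2_norm_eq_inner inner_vec_def by (simp add: power2_eq_square)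

lemma pyth_diff: "(a::'a::real_inner) \<bullet> b = 0 \<Longrightarrow> (norm (a - b))\<^sup>2 = (norm a)\<^sup>2 + (norm b)\<^sup>2"
  by (simp add: power2_norm_eq_inner inner_diff_left inner_diff_right inner_commute)

lemma pyth_add: "(a::'a::real_inner) \<bullet> b = 0 \<Longrightarrow> (norm (a + b))\<^sup>2 = (norm a)\<^sup>2 + (norm b)\<^sup>2"
  by (simp add: power2_norm_eq_inner inner_add_left inner_add_right inner_commute)

lemma inner_T_transp: "(T *v (a::real^'n)) \<bullet> (b::real^'l) = a \<bullet> (transpose T *v b)"
  by (metis dot_lmul_matrix vector_transpose_matrix)

lemma scalar_strong:
  fixes a s \<gamma> :: real
  assumes "\<gamma> > 0"
  defines "ss \<equiv> (if a \<ge> \<gamma> then a - \<gamma> else if a \<le> - \<gamma> then a + \<gamma> else 0)"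
  shows "1/2*(a-s)\<^sup>2 + \<gamma>*\<bar>s\<bar> \<ge> 1/2*(a-ss)\<^sup>2 + \<gamma>*\<bar>ss\<bar> + 1/2*(s-ss)\<^sup>2"
proof -
  consider "a \<ge> \<gamma>" | "a \<le> -\<gamma>" | "\<bar>a\<bar> < \<gamma>" using assms by linarith
  then show ?thesis
  proof cases
    case 1
    then have e: "ss = a - \<gamma>" by (simp add: ss_def)
    have "1/2*(a-s)\<^sup>2 + \<gamma>*\<bar>s\<bar> - (1/2*(a-ss)\<^sup>2 + \<gamma>*\<bar>ss\<bar> + 1/2*(s-ss)\<^sup>2)
        = \<gamma>*(\<bar>s\<bar> - s)" using 1 assms by (simp add: e power2_eq_square algebra_simps)
    moreover have "\<gamma>*(\<bar>s\<bar> - s) \<ge> 0" using assms by simp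
    ultimately show ?thesis by linarith
  next
    case 2
    then have e: "ss = a + \<gamma>" using assms by (simp add: ss_def)
    have "1/2*(a-s)\<^sup>2 + \<gamma>*\<bar>s\<bar> - (1/2*(a-ss)\<^sup>2 + \<gamma>*\<bar>ss\<bar> + 1/2*(s-ss)\<^sup>2)
        = \<gamma>*(\<bar>s\<bar> + s)" using 2 assms by (simp add: e power2_eq_square algebra_simps)
    moreover have "\<gamma>*(\<bar>s\<bar> + s) \<ge> 0" using assms by simp
    ultimately show ?thesis by linarith
  next
    case 3
    then have e: "ss = 0" by (simp add: ss_def abs_less_iff)
    have "1/2*(a-s)\<^sup>2 + \<gamma>*\<bar>s\<bar> - (1/2*(a-ss)\<^sup>2 + \<gamma>*\<bar>ss\<bar> + 1/2*(s-ss)\<^sup>2)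
        = \<gamma> * abs s - a * s" by (simp add: e power2_eq_square algebra_simps)
    moreover have "a * s \<le> \<gamma>*\<bar>s\<bar>"
    proof -
      have "a * s \<le> \<bar>a\<bar>*\<bar>s\<bar>" by (metis abs_ge_self abs_mult)
      also have "\<dots> \<le> \<gamma>*\<bar>s\<bar>" using 3 by (simp add: mult_right_mono)
      finally show ?thesis .
    qed
    ultimately show ?thesis by linarith
  qed
qed

lemma vec_strong:
  fixes a u :: "real^'l"
  assumes "\<gamma> > 0"
  shows "1/2*(norm (a-u))\<^sup>2 + \<gamma>*(\<Sum>j\<in>UNIV. \<bar>u$j\<bar>) \<ge>
     1/2*(norm (a - soft_shrink \<gamma> a))\<^sup>2 + \<gamma>*(\<Sum>j\<in>UNIV. \<bar>soft_shrink \<gamma> a$j\<bar>)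
     + 1/2*(norm (u - soft_shrink \<gamma> a))\<^sup>2"
proof -
  have "(\<Sum>j\<in>UNIV. 1/2*(a$j - soft_shrink \<gamma> a$j)\<^sup>2 + \<gamma>*\<bar>soft_shrink \<gamma> a$j\<bar> + 1/2*(u$j - soft_shrink \<gamma> a$j)\<^sup>2)
     \<le> (\<Sum>j\<in>UNIV. 1/2*(a$j - u$j)\<^sup>2 + \<gamma>*\<bar>u$j\<bar>)"
    by (rule sum_mono) (use scalar_strong[OF assms] in \<open>simp add: soft_shrink_def\<close>)
  then show ?thesis
    by (simp add: norm2_sum sum.distrib sum_distrib_left)
qed

lemma scal_sq_conv: "((1-t)*p + t*q)\<^sup>2 \<le> (1-t)*p\<^sup>2 + t*(q::real)\<^sup>2" if "0 \<le> t" "t \<le> 1"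
proof -
  have "(1-t)*p\<^sup>2 + t*q\<^sup>2 - ((1-t)*p + t*q)\<^sup>2 = t*(1-t)*(p-q)\<^sup>2"
    by (simp add: power2_eq_square algebra_simps)
  moreover have "t*(1-t)*(p-q)\<^sup>2 \<ge> 0" using that by simp
  ultimately show ?thesis by linarith
qed

lemma scal_abs_conv: "\<bar>(1-t)*p + t*q\<bar> \<le> (1-t)*\<bar>p\<bar> + t*\<bar>q::real\<bar>" if "0 \<le> t" "t \<le> 1"
proof -
  have "\<bar>(1-t)*p + t*q\<bar> \<le> \<bar>(1-t)*p\<bar> + \<bar>t*q\<bar>" by (rule abs_triangle_ineq)
  also have "\<dots> = (1-t)*\<bar>p\<bar> + t*\<bar>q\<bar>" using that by (simp add: abs_mult)
  finally show ?thesis .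
qed


definition PhiSet :: "real^'n^'l \<Rightarrow> real \<Rightarrow> real^'n \<Rightarrow> real set" where
  "PhiSet T \<gamma> x = {1/2*(norm w)\<^sup>2 + \<gamma>*(\<Sum>j\<in>UNIV. \<bar>(T *v x + w)$j\<bar>) | w. transpose T *v w = 0}"

definition PhiF :: "real^'n^'l \<Rightarrow> real \<Rightarrow> real^'n \<Rightarrow> real" where
  "PhiF T \<gamma> x = Inf (PhiSet T \<gamma> x)"

lemma PhiSet_ne: "PhiSet T \<gamma> x \<noteq> {}"
  unfolding PhiSet_def by (auto intro!: exI[of _ 0])

lemma PhiSet_bdd: "\<gamma> > 0 \<Longrightarrow> bdd_below (PhiSet T \<gamma> x)"
  unfolding PhiSet_def bdd_below_def
  by (rule exI[of _ 0]) (auto intro!: add_nonneg_nonneg sum_nonneg)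

lemma PhiF_le: "\<gamma> > 0 \<Longrightarrow> transpose T *v w = 0 \<Longrightarrow>
   PhiF T \<gamma> x \<le> 1/2*(norm w)\<^sup>2 + \<gamma>*(\<Sum>j\<in>UNIV. \<bar>(T *v x + w)$j\<bar>)"
  unfolding PhiF_def by (rule cInf_lower[OF _ PhiSet_bdd]) (auto simp: PhiSet_def)

lemma PhiF_ge: "(\<And>w. transpose T *v w = 0 \<Longrightarrow>
     c \<le> 1/2*(norm w)\<^sup>2 + \<gamma>*(\<Sum>j\<in>UNIV. \<bar>(T *v x + w)$j\<bar>)) \<Longrightarrow> c \<le> PhiF T \<gamma> x"
  unfolding PhiF_def by (rule cInf_greatest[OF PhiSet_ne]) (auto simp: PhiSet_def)

lemma PhiF_convex:
  fixes T :: "real^'n^'l"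
  assumes "\<gamma> > 0"
  shows "convex_on UNIV (PhiF T \<gamma>)"
proof (rule convex_onI)
  fix t :: real and x y :: "real^'n"
  assume t: "0 < t" "t < 1"
  let ?g = "\<lambda>x w. 1/2*(norm w)\<^sup>2 + \<gamma>*(\<Sum>j\<in>UNIV. \<bar>(T *v x + w)$j\<bar>)"
  let ?m = "(1 - t) *\<^sub>R x + t *\<^sub>R y"
  have key: "PhiF T \<gamma> ?m \<le> (1-t) * ?g x w1 + t * ?g y w2"
    if w1: "transpose T *v w1 = 0" and w2: "transpose T *v w2 = 0" for w1 w2
  proof -
    let ?w = "(1 - t) *\<^sub>R w1 + t *\<^sub>R w2"
    have adm: "transpose T *v ?w = 0" using w1 w2 by (simp add: matrix_vector_right_distrib matrix_vector_mult_scaleR)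
    have eq: "T *v ?m + ?w = (1-t) *\<^sub>R (T *v x + w1) + t *\<^sub>R (T *v y + w2)"
      by (simp add: matrix_vector_right_distrib matrix_vector_mult_scaleR algebra_simps)
    have n: "(norm ?w)\<^sup>2 \<le> (1-t)*(norm w1)\<^sup>2 + t*(norm w2)\<^sup>2"
    proof -
      have "(norm ?w)\<^sup>2 = (\<Sum>j\<in>UNIV. ((1-t)*(w1$j) + t*(w2$j))\<^sup>2)" by (simp add: norm2_sum)
      also have "\<dots> \<le> (\<Sum>j\<in>UNIV. (1-t)*(w1$j)\<^sup>2 + t*(w2$j)\<^sup>2)"
        by (rule sum_mono, rule scal_sq_conv) (use t in auto)
      also have "\<dots> = (1-t)*(norm w1)\<^sup>2 + t*(norm w2)\<^sup>2"
        by (simp add: norm2_sum sum.distrib sum_distrib_left)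
      finally show ?thesis .
    qed
    have a: "(\<Sum>j\<in>UNIV. \<bar>(T *v ?m + ?w)$j\<bar>) \<le> (1-t)*(\<Sum>j\<in>UNIV. \<bar>(T *v x + w1)$j\<bar>) + t*(\<Sum>j\<in>UNIV. \<bar>(T *v y + w2)$j\<bar>)"
    proof -
      have "(\<Sum>j\<in>UNIV. \<bar>(T *v ?m + ?w)$j\<bar>) \<le> (\<Sum>j\<in>UNIV. (1-t)*\<bar>(T *v x + w1)$j\<bar> + t*\<bar>(T *v y + w2)$j\<bar>)"
        unfolding eq by (rule sum_mono) (use t scal_abs_conv in auto)
      also have "\<dots> = (1-t)*(\<Sum>j\<in>UNIV. \<bar>(T *v x + w1)$j\<bar>) + t*(\<Sum>j\<in>UNIV. \<bar>(T *v y + w2)$j\<bar>)"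
        by (simp add: sum.distrib sum_distrib_left)
      finally show ?thesis .
    qed
    have "PhiF T \<gamma> ?m \<le> ?g ?m ?w" by (rule PhiF_le[OF assms adm])
    also have "\<dots> \<le> (1-t) * ?g x w1 + t * ?g y w2"
    proof -
      have a': "\<gamma> * (\<Sum>j\<in>UNIV. \<bar>(T *v ?m + ?w)$j\<bar>) \<le> (1-t)*(\<gamma>*(\<Sum>j\<in>UNIV. \<bar>(T *v x + w1)$j\<bar>)) + t*(\<gamma>*(\<Sum>j\<in>UNIV. \<bar>(T *v y + w2)$j\<bar>))"
        using mult_left_mono[OF a, of \<gamma>] assms by (simp add: algebra_simps)
      show ?thesis using n a' unfolding distrib_left by linarith
    qed
    finally show ?thesis .
  qed
  have k2: "PhiF T \<gamma> ?m - t * ?g y w2 \<le> (1-t) * PhiF T \<gamma> x" if w2: "transpose T *v w2 = 0" for w2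
  proof -
    have "(PhiF T \<gamma> ?m - t * ?g y w2) / (1-t) \<le> PhiF T \<gamma> x"
      by (rule PhiF_ge) (use key[OF _ w2] t in \<open>simp add: divide_simps algebra_simps\<close>)
    then show ?thesis using t by (simp add: divide_simps algebra_simps)
  qed
  have "(PhiF T \<gamma> ?m - (1-t) * PhiF T \<gamma> x) / t \<le> PhiF T \<gamma> y"
    by (rule PhiF_ge) (use k2 t in \<open>simp add: divide_simps algebra_simps\<close>)
  then show "PhiF T \<gamma> ?m \<le> (1 - t) * PhiF T \<gamma> x + t * PhiF T \<gamma> y"
    using t by (simp add: divide_simps algebra_simps)
qed simp


lemma pinv_prop:
  fixes T :: "real^'n^'l"
  assumes "rank T = CARD('n)"
  shows "transpose T *v (T *v (pinv T *v u)) = transpose T *v u"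
proof -
  let ?G = "transpose T ** T"
  have inj: "inj ((*v) T)" using assms full_rank_injective by blast
  have injG: "inj ((*v) ?G)"
  proof (rule injI)
    fix x y assume "?G *v x = ?G *v y"
    then have "?G *v (x - y) = 0" by (simp add: matrix_vector_mult_diff_distrib)
    then have "(T *v (x-y)) \<bullet> (T *v (x-y)) = 0"
      by (simp add: inner_T_transp matrix_vector_mul_assoc)
    then have "T *v (x - y) = 0" by simp
    then have "T *v x = T *v y" by (simp add: matrix_vector_mult_diff_distrib)
    then show "x = y" using inj by (simp add: inj_eq)
  qed
  then have "invertible ?G" using invertible_left_inverse matrix_left_invertible_injective by blast
  then have "\<exists>A'. ?G ** A' = mat 1 \<and> A' ** ?G = mat 1" by (simp add: invertible_def)
  then have GG: "?G ** matrix_inv ?G = mat 1" unfolding matrix_inv_def by (rule someI2_ex) blast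
  have "transpose T *v (T *v (pinv T *v u)) = ?G *v (matrix_inv ?G *v (transpose T *v u))"
    unfolding pinv_def by (metis matrix_vector_mul_assoc)
  also have "\<dots> = transpose T *v u" using GG by (metis matrix_vector_mul_assoc matrix_vector_mul_lid)
  finally show ?thesis .
qed

theorem theorem3p5:
  fixes T :: "real^'n^'l" and \<gamma> :: real
  assumes "CARD('n) \<le> CARD('l)"
    and "rank T = CARD('n)"
    and "\<gamma> > 0"
  shows "\<exists>\<Phi> :: real^'n \<Rightarrow> ereal. proper_fun \<Phi> \<and> lsc_fun \<Phi> \<and> convex_fun \<Phi> \<and>
    (\<forall>z :: real^'n.
       {x. \<forall>y. ereal (1/2 * (norm_T T (z - x))\<^sup>2) + \<Phi> x
                 \<le> ereal (1/2 * (norm_T T (z - y))\<^sup>2) + \<Phi> y}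
       = {pinv T *v soft_shrink \<gamma> (T *v z)})"
proof (intro exI[of _ "\<lambda>x. ereal (PhiF T \<gamma> x)"] conjI allI)
  have cvx: "convex_on UNIV (PhiF T \<gamma>)" by (rule PhiF_convex[OF assms(3)])
  have cont: "continuous_on UNIV (PhiF T \<gamma>)" by (rule convex_on_continuous[OF open_UNIV cvx])
  have inj: "inj ((*v) T)" using assms(2) full_rank_injective by blast
  show "proper_fun (\<lambda>x. ereal (PhiF T \<gamma> x))" by (simp add: proper_fun_def)
  show "lsc_fun (\<lambda>x. ereal (PhiF T \<gamma> x))"
    unfolding lsc_fun_def
    by (auto intro!: closed_Collect_le cont continuous_on_const)
  show "convex_fun (\<lambda>x. ereal (PhiF T \<gamma> x))"
    unfolding convex_fun_def convex_alt
  proof (clarsimp)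
    fix x y :: "real^'n" and a b u :: real
    assume h: "PhiF T \<gamma> x \<le> a" "PhiF T \<gamma> y \<le> b" "0 \<le> u" "u \<le> 1"
    have "PhiF T \<gamma> ((1 - u) *\<^sub>R x + u *\<^sub>R y) \<le> (1-u) * PhiF T \<gamma> x + u * PhiF T \<gamma> y"
      using convex_onD[OF cvx, of u x y] h by simp
    also have "\<dots> \<le> (1-u) * a + u * b"
      using h by (intro add_mono mult_left_mono) auto
    finally show "PhiF T \<gamma> ((1 - u) *\<^sub>R x + u *\<^sub>R y) \<le> (1-u) * a + u * b" .
  qed
  fix z :: "real^'n"
  define a where "a = T *v z"
  define us where "us = soft_shrink \<gamma> a"
  define p where "p = pinv T *v us"
  define ws where "ws = us - T *v p"
  define F where "F = 1/2*(norm (a - us))\<^sup>2 + \<gamma>*(\<Sum>j\<in>UNIV. \<bar>us$j\<bar>)"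
  define V where "V = (\<lambda>x. 1/2 * (norm_T T (z - x))\<^sup>2 + PhiF T \<gamma> x)"
  have Vn: "norm_T T (z - x) = norm (T *v (z - x))" for x
    by (simp add: norm_T_def)
  have orth: "(T *v v) \<bullet> w = 0" if "transpose T *v w = 0" for v w
    using that by (simp add: inner_T_transp)
  have wsadm: "transpose T *v ws = 0"
    using pinv_prop[OF assms(2), of us] by (simp add: ws_def p_def matrix_vector_mult_diff_distrib)
  have Vp: "V p \<le> F"
  proof -
    have "PhiF T \<gamma> p \<le> 1/2*(norm ws)\<^sup>2 + \<gamma>*(\<Sum>j\<in>UNIV. \<bar>us$j\<bar>)"
      using PhiF_le[OF assms(3) wsadm, of p] by (simp add: ws_def)
    moreover have "(norm (a - us))\<^sup>2 = (norm (T *v (z - p)))\<^sup>2 + (norm ws)\<^sup>2"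
    proof -
      have eq: "a - us = T *v (z - p) - ws" by (simp add: a_def ws_def matrix_vector_mult_diff_distrib)
      show ?thesis unfolding eq by (rule pyth_diff[OF orth[OF wsadm, of "z - p"]])
    qed
    ultimately show ?thesis unfolding V_def Vn F_def by linarith
  qed
  have Vx: "F + 1/2*(norm (T *v (x - p)))\<^sup>2 \<le> V x" for x
  proof -
    have "F + 1/2*(norm (T *v (x - p)))\<^sup>2 - 1/2*(norm (T *v (z - x)))\<^sup>2 \<le> PhiF T \<gamma> x"
    proof (rule PhiF_ge)
      fix w :: "real^'l" assume w: "transpose T *v w = 0"
      let ?u = "T *v x + w"
      have s: "F + 1/2*(norm (?u - us))\<^sup>2 \<le> 1/2*(norm (a - ?u))\<^sup>2 + \<gamma>*(\<Sum>j\<in>UNIV. \<bar>?u$j\<bar>)"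
        using vec_strong[OF assms(3), of a ?u] by (simp add: F_def us_def)
      have e1: "(norm (a - ?u))\<^sup>2 = (norm (T *v (z - x)))\<^sup>2 + (norm w)\<^sup>2"
      proof -
        have eq: "a - ?u = T *v (z - x) - w" by (simp add: a_def matrix_vector_mult_diff_distrib)
        show ?thesis unfolding eq by (rule pyth_diff[OF orth[OF w, of "z - x"]])
      qed
      have wd: "transpose T *v (w - ws) = 0" using w wsadm by (simp add: matrix_vector_mult_diff_distrib)
      have e2: "(norm (?u - us))\<^sup>2 = (norm (T *v (x - p)))\<^sup>2 + (norm (w - ws))\<^sup>2"
      proof -
        have eq: "?u - us = T *v (x - p) + (w - ws)" by (simp add: ws_def matrix_vector_mult_diff_distrib)
        show ?thesis unfolding eq by (rule pyth_add[OF orth[OF wd, of "x - p"]])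
      qed
      show "F + 1/2*(norm (T *v (x - p)))\<^sup>2 - 1/2*(norm (T *v (z - x)))\<^sup>2
          \<le> 1/2*(norm w)\<^sup>2 + \<gamma>*(\<Sum>j\<in>UNIV. \<bar>?u$j\<bar>)"
        using s e1 e2 zero_le_power2[of "norm (w - ws)"] by linarith
    qed
    then show ?thesis by (simp add: V_def Vn)
  qed
  have "{x. \<forall>y. V x \<le> V y} = {p}"
  proof (intro set_eqI iffI)
    fix x assume "x \<in> {x. \<forall>y. V x \<le> V y}"
    then have "V x \<le> V p" by simp
    with Vp Vx[of x] have "(norm (T *v (x - p)))\<^sup>2 \<le> 0" by linarith
    then have "T *v (x - p) = 0" by simp
    then have "T *v x = T *v p" by (simp add: matrix_vector_mult_diff_distrib)
    then show "x \<in> {p}" using inj by (simp add: inj_eq)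
  next
    fix x assume "x \<in> {p}"
    then have xp: "x = p" by simp
    have "V p \<le> V y" for y
      using Vp Vx[of y] zero_le_power2[of "norm (T *v (y - p))"] by linarith
    then show "x \<in> {x. \<forall>y. V x \<le> V y}" using xp by simp
  qed
  then show "{x. \<forall>y. ereal (1/2 * (norm_T T (z - x))\<^sup>2) + ereal (PhiF T \<gamma> x)
                 \<le> ereal (1/2 * (norm_T T (z - y))\<^sup>2) + ereal (PhiF T \<gamma> y)}
       = {pinv T *v soft_shrink \<gamma> (T *v z)}"
    unfolding V_def p_def us_def a_def plus_ereal.simps ereal_less_eq(3) .
qed

end
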